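(* Let $H$ be a real Hilbert space and $\{C_\alpha\}_{\alpha\in\Omega}$ ($|\Omega|\ge2$) a family of closed convex subsets of $H$ with nonempty intersection $C=\bigcap_{\alpha\in\Omega}C_\alpha$. Let $\{t_n\}\subset[0,1]$ be such that there exist $\delta>0$ and $K\in\mathbb N$ with the property that for every $n\in\mathbb N$ at least one of $t_n,t_{n+1},\dots,t_{n+K}$ is greater than $\delta$. Then for every starting element $x_0\in H$, every sequence $\{x_n\}$ of remote projections onto $\{C_\alpha\}$ with weakness parameters $\{t_n\}$ converges weakly to some point of $C$.
   Context: $P_\alpha$ denotes the metric projection onto $C_\alpha$. A sequence of remote projections with weakness parameters $t_n\in[0,1]$ starting at $x_0$ is defined by $x_{n+1}=P_{\alpha(n)}x_n$, where $\alpha(n)\in\Omega$ is any index with $\mathrm{dist}(x_n,C_{\alpha(n)})\ge t_n\sup_{\alpha}\mathrm{dist}(x_n,C_\alpha)$; if $t_n=1$ for at least one $n$, it is additionally required that $\max_\alpha\mathrm{dist}(x,C_\alpha)$ is attained for every $x\in H$. *)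

theory Defs
  imports "HOL-Analysis.Analysis"
begin

text \<open>Same definition as the library's closest_point, which is restricted to heine_borel spaces.\<close>
definition metric_projection :: "'a::real_inner set \<Rightarrow> 'a \<Rightarrow> 'a" where
  "metric_projection S a = (SOME x. x \<in> S \<and> (\<forall>y\<in>S. dist a x \<le> dist a y))"

definition remote_projections ::
  "'i set \<Rightarrow> ('i \<Rightarrow> 'a::real_inner set) \<Rightarrow> (nat \<Rightarrow> real) \<Rightarrow> (nat \<Rightarrow> 'i) \<Rightarrow> (nat \<Rightarrow> 'a) \<Rightarrow> bool"
where
  "remote_projections \<Omega> C t \<alpha> x \<longleftrightarrow>
     (\<forall>n. \<alpha> n \<in> \<Omega>
        \<and> infdist (x n) (C (\<alpha> n)) \<ge> t n * (SUP \<beta>\<in>\<Omega>. infdist (x n) (C \<beta>))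
        \<and> x (Suc n) = metric_projection (C (\<alpha> n)) (x n))
   \<and> ((\<exists>n. t n = 1) \<longrightarrow>
        (\<forall>y. \<exists>\<beta>\<in>\<Omega>. \<forall>\<gamma>\<in>\<Omega>. infdist y (C \<gamma>) \<le> infdist y (C \<beta>)))"

definition weakly_converges :: "(nat \<Rightarrow> 'a::real_inner) \<Rightarrow> 'a \<Rightarrow> bool" where
  "weakly_converges x p \<longleftrightarrow> (\<forall>y. (\<lambda>n. x n \<bullet> y) \<longlonglongrightarrow> p \<bullet> y)"

end

theory Submission
  imports Defs
begin

lemma parallelogram_mid:
  fixes a b :: "'a::real_inner"
  shows "(norm (a - b))\<^sup>2 = 2 * (norm a)\<^sup>2 + 2 * (norm b)\<^sup>2 - 4 * (norm ((1/2) *\<^sub>R a + (1/2) *\<^sub>R b))\<^sup>2"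
  by (simp add: power2_norm_eq_inner inner_simps inner_commute algebra_simps)

lemma nested_convex_nonempty:
  fixes D :: "nat \<Rightarrow> 'a::{real_inner,complete_space} set"
  assumes dec: "\<And>n. D (Suc n) \<subseteq> D n"
    and ne: "\<And>n. D n \<noteq> {}"
    and cl: "\<And>n. closed (D n)"
    and cv: "\<And>n. convex (D n)"
    and bd: "bounded (D 0)"
  shows "\<exists>q. \<forall>n. q \<in> D n"
proof -
  have decle: "D m \<subseteq> D n" if "n \<le> m" for n m
    using lift_Suc_antimono_le[of D, OF dec that] .
  obtain B where B: "\<And>y. y \<in> D 0 \<Longrightarrow> norm y \<le> B"
    using bd by (auto simp: bounded_iff)
  define e where "e n = Inf ((\<lambda>y. (norm y)\<^sup>2) ` D n)" for n
  have bddb: "bdd_below ((\<lambda>y. (norm y)\<^sup>2) ` D n)" for n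
    by (rule bdd_belowI[of _ 0]) auto
  have e_le: "e n \<le> (norm y)\<^sup>2" if "y \<in> D n" for n y
    unfolding e_def using bddb that by (auto intro: cInf_lower)
  have e_mono: "e n \<le> e m" if "n \<le> m" for n m
    unfolding e_def using decle[OF that] ne[of m] bddb[of n]
    by (intro cInf_superset_mono) auto
  have inc: "incseq e" using e_mono by (auto simp: incseq_def)
  have eB: "e n \<le> B\<^sup>2" for n
  proof -
    obtain y where y: "y \<in> D n" using ne by blast
    then have "y \<in> D 0" using decle[of 0 n] by auto
    then have "norm y \<le> B" using B by auto
    then have "(norm y)\<^sup>2 \<le> B\<^sup>2" by (simp add: power_mono)
    then show ?thesis using e_le[OF y] by linarith
  qed
  have bdda: "bdd_above (range e)" using eB by (intro bdd_aboveI[of _ "B\<^sup>2"]) auto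
  define E where "E = Sup (range e)"
  have eE: "e \<longlonglongrightarrow> E" unfolding E_def using LIMSEQ_incseq_SUP[OF bdda inc] .
  have e_leE: "e n \<le> E" for n unfolding E_def using bdda by (auto intro: cSUP_upper)
  have ex: "\<exists>w. w \<in> D n \<and> (norm w)\<^sup>2 < e n + 1 / (real n + 1)" for n
  proof -
    define z where "z = e n + 1 / (real n + 1)"
    have "e n < z" unfolding z_def by simp
    then have "Inf ((\<lambda>y. (norm y)\<^sup>2) ` D n) < z"
      unfolding e_def .
    moreover have ne': "(\<lambda>y. (norm y)\<^sup>2) ` D n \<noteq> {}" using ne[of n] by simp
    ultimately have "\<exists>v\<in>(\<lambda>y. (norm y)\<^sup>2) ` D n. v < z"
      using cInf_lessD[OF ne'] by blast
    then show ?thesis unfolding z_def by auto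
  qed
  obtain w where w0: "\<forall>n. w n \<in> D n \<and> (norm (w n))\<^sup>2 < e n + 1 / (real n + 1)"
    using choice[of "\<lambda>n w. w \<in> D n \<and> (norm w)\<^sup>2 < e n + 1 / (real n + 1)"] ex by blast
  have w: "\<And>n. w n \<in> D n" "\<And>n. (norm (w n))\<^sup>2 < e n + 1 / (real n + 1)"
    using w0 by auto
  have key: "(norm (w n - w m))\<^sup>2 \<le> 2 * (E - e n) + 4 / (real n + 1)" if "n \<le> m" for n m
  proof -
    have wm: "w m \<in> D n" using w(1)[of m] decle[OF that] by auto
    have "(1/2) *\<^sub>R w n + (1/2) *\<^sub>R w m \<in> D n"
      using convexD[OF cv w(1)[of n] wm] by auto
    then have mid: "e n \<le> (norm ((1/2) *\<^sub>R w n + (1/2) *\<^sub>R w m))\<^sup>2" by (rule e_le)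
    have "1 / (real m + 1) \<le> 1 / (real n + 1)" using that by (simp add: frac_le)
    moreover have "e m \<le> E" by (rule e_leE)
    ultimately show ?thesis
      using parallelogram_mid[of "w n" "w m"] mid w(2)[of n] w(2)[of m] by simp
  qed
  have "Cauchy w"
  proof (rule metric_CauchyI)
    fix \<epsilon> :: real assume ep: "\<epsilon> > 0"
    have "eventually (\<lambda>n. dist (e n) E < \<epsilon>\<^sup>2 / 4) sequentially"
      using tendstoD[OF eE, of "\<epsilon>\<^sup>2 / 4"] ep by simp
    then obtain N1 where N1: "\<And>n. n \<ge> N1 \<Longrightarrow> dist (e n) E < \<epsilon>\<^sup>2 / 4"
      by (auto simp: eventually_sequentially)
    obtain N2 :: nat where N2: "real N2 > 8 / \<epsilon>\<^sup>2" using reals_Archimedean2 by blast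
    define N where "N = max N1 N2"
    have "dist (w n) (w m) < \<epsilon>" if nm: "n \<ge> N" "m \<ge> N" for n m
    proof -
      have gen: "dist (w a) (w b) < \<epsilon>" if "N \<le> a" "a \<le> b" for a b
      proof -
        have "E - e a < \<epsilon>\<^sup>2 / 4" using N1[of a] that e_leE[of a] by (auto simp: N_def dist_real_def)
        moreover have "4 / (real a + 1) < \<epsilon>\<^sup>2 / 2"
        proof -
          have "real a + 1 > 8 / \<epsilon>\<^sup>2" using N2 that by (auto simp: N_def)
          then have "8 < \<epsilon>\<^sup>2 * (real a + 1)" using ep by (simp add: field_simps)
          then show ?thesis using ep by (simp add: field_simps)
        qed
        ultimately have "(norm (w a - w b))\<^sup>2 < \<epsilon>\<^sup>2" using key[OF that(2)] by argo
        then show ?thesis using ep by (simp add: dist_norm power_less_imp_less_base)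
      qed
      show ?thesis
      proof (cases "n \<le> m")
        case True then show ?thesis using gen nm by auto
      next
        case False then show ?thesis using gen[of m n] nm by (auto simp: dist_commute)
      qed
    qed
    then show "\<exists>N. \<forall>m\<ge>N. \<forall>n\<ge>N. dist (w m) (w n) < \<epsilon>" by blast
  qed
  then obtain q where q: "w \<longlonglongrightarrow> q" using Cauchy_convergent convergent_def by blast
  have "q \<in> D n" for n
  proof (rule Lim_in_closed_set[OF cl _ _ q])
    show "\<forall>\<^sub>F m in sequentially. w m \<in> D n"
      unfolding eventually_sequentially using w(1) decle by blast
  qed auto
  then show ?thesis by blast
qed


lemma infdist_approx:
  assumes "A \<noteq> {}" "e > 0"
  shows "\<exists>y\<in>A. dist x y < infdist x A + e"
proof -
  have h1: "Inf (dist x ` A) < infdist x A + e" using assms infdist_notempty[of A x] by simp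
  have h2: "dist x ` A \<noteq> {}" using assms by simp
  show ?thesis using cInf_lessD[OF h2 h1] by auto
qed

lemma infdist_ge:
  assumes "A \<noteq> {}" "\<And>y. y \<in> A \<Longrightarrow> r \<le> dist x y"
  shows "r \<le> infdist x A"
  using assms by (simp add: infdist_notempty cINF_greatest)

lemma proj_exists:
  fixes S :: "'a::{real_inner,complete_space} set"
  assumes cl: "closed S" and cv: "convex S" and ne: "S \<noteq> {}"
  shows "\<exists>u\<in>S. \<forall>y\<in>S. dist a u \<le> dist a y"
proof -
  define D where "D n = S \<inter> cball a (infdist a S + 1 / (real n + 1))" for n
  have "\<exists>q. \<forall>n. q \<in> D n"
  proof (rule nested_convex_nonempty)
    show "D (Suc n) \<subseteq> D n" for n
    proof -
      have "1 / (real (Suc n) + 1) \<le> 1 / (real n + 1)" by (simp add: frac_le)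
      then show ?thesis unfolding D_def by auto
    qed
    show "D n \<noteq> {}" for n
    proof -
      obtain y where "y \<in> S" "dist a y < infdist a S + 1 / (real n + 1)"
        using infdist_approx[OF ne, of "1 / (real n + 1)" a] by auto
      then show ?thesis unfolding D_def by auto
    qed
    show "closed (D n)" for n unfolding D_def using cl by auto
    show "convex (D n)" for n unfolding D_def using cv by (auto intro: convex_Int)
    show "bounded (D 0)" unfolding D_def by auto
  qed
  then obtain q where q: "\<And>n. q \<in> D n" by blast
  have qS: "q \<in> S" using q[of 0] by (auto simp: D_def)
  have "dist a q \<le> infdist a S"
  proof (rule field_le_epsilon)
    fix e :: real assume "e > 0"
    then obtain n :: nat where "inverse (real (Suc n)) < e"
      using reals_Archimedean by blast
    then have "1 / (real n + 1) < e" by (simp add: inverse_eq_divide add.commute)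
    then show "dist a q \<le> infdist a S + e" using q[of n] by (auto simp: D_def)
  qed
  then have "\<forall>y\<in>S. dist a q \<le> dist a y"
    using infdist_le[of _ S a] by fastforce
  then show ?thesis using qS by blast
qed

lemma norm_add_sq:
  fixes x y :: "'a::real_inner"
  shows "(norm (x + y))\<^sup>2 = (norm x)\<^sup>2 + (norm y)\<^sup>2 + 2 * (x \<bullet> y)"
  by (simp add: power2_norm_eq_inner inner_add inner_commute)

lemma norm_diff_sq:
  fixes x y :: "'a::real_inner"
  shows "(norm (x - y))\<^sup>2 = (norm x)\<^sup>2 + (norm y)\<^sup>2 - 2 * (x \<bullet> y)"
  by (simp add: power2_norm_eq_inner inner_diff inner_commute)

lemma proj_props:
  fixes S :: "'a::{real_inner,complete_space} set"
  assumes cl: "closed S" and cv: "convex S" and ne: "S \<noteq> {}"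
    and u: "u = metric_projection S a"
  shows "u \<in> S" "dist a u = infdist a S"
    "\<And>c. c \<in> S \<Longrightarrow> (dist u c)\<^sup>2 + (dist a u)\<^sup>2 \<le> (dist a c)\<^sup>2"
proof -
  have ex: "\<exists>x. x \<in> S \<and> (\<forall>y\<in>S. dist a x \<le> dist a y)"
    using proj_exists[OF cl cv ne, of a] by blast
  have P: "u \<in> S \<and> (\<forall>y\<in>S. dist a u \<le> dist a y)"
    unfolding u metric_projection_def using ex by (rule someI_ex)
  then show uS: "u \<in> S" by blast
  have i1: "infdist a S \<le> dist a u" by (rule infdist_le[OF uS])
  have i2: "dist a u \<le> infdist a S" by (rule infdist_ge[OF ne]) (use P in blast)
  show "dist a u = infdist a S" using i1 i2 by linarith
  fix c assume cS: "c \<in> S"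
  have var: "(a - u) \<bullet> (c - u) \<le> 0"
  proof (rule ccontr)
    assume "\<not> ?thesis"
    then have g: "(a - u) \<bullet> (c - u) > 0" by simp
    then have "c \<noteq> u" by auto
    then have nz: "(norm (c - u))\<^sup>2 > 0" by simp
    define t where "t = min 1 (((a - u) \<bullet> (c - u)) / (norm (c - u))\<^sup>2)"
    have t0: "t > 0" unfolding t_def using g nz by simp
    have t1: "t \<le> 1" unfolding t_def by simp
    have tg: "t * (norm (c - u))\<^sup>2 \<le> (a - u) \<bullet> (c - u)"
    proof -
      have "t \<le> ((a - u) \<bullet> (c - u)) / (norm (c - u))\<^sup>2" unfolding t_def by simp
      then show ?thesis using nz by (simp add: field_simps)
    qed
    have "(1 - t) *\<^sub>R u + t *\<^sub>R c \<in> S" using convexD[OF cv uS cS] t0 t1 by simp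
    then have d1: "dist a u \<le> dist a ((1 - t) *\<^sub>R u + t *\<^sub>R c)" using P by blast
    have eq: "a - ((1 - t) *\<^sub>R u + t *\<^sub>R c) = (a - u) - t *\<^sub>R (c - u)"
      by (simp add: algebra_simps)
    have "norm (a - u) \<le> norm ((a - u) - t *\<^sub>R (c - u))"
      using d1 unfolding dist_norm eq .
    then have "(norm (a - u))\<^sup>2 \<le> (norm ((a - u) - t *\<^sub>R (c - u)))\<^sup>2"
      by (simp add: power_mono)
    also have "\<dots> = (norm (a - u))\<^sup>2 + t * (t * (norm (c - u))\<^sup>2) - 2 * (t * ((a - u) \<bullet> (c - u)))"
    proof -
      have "(norm (t *\<^sub>R (c - u)))\<^sup>2 = t * (t * (norm (c - u))\<^sup>2)"
        by (simp add: power_mult_distrib power2_eq_square)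
      moreover have "(a - u) \<bullet> (t *\<^sub>R (c - u)) = t * ((a - u) \<bullet> (c - u))" by simp
      ultimately show ?thesis using norm_diff_sq[of "a - u" "t *\<^sub>R (c - u)"] by simp
    qed
    finally have "2 * (t * ((a - u) \<bullet> (c - u))) \<le> t * (t * (norm (c - u))\<^sup>2)" by simp
    then have "2 * ((a - u) \<bullet> (c - u)) \<le> t * (norm (c - u))\<^sup>2" using t0 by simp
    then show False using tg g by simp
  qed
  have e2: "a - c = (a - u) + (u - c)" by simp
  have e3: "(a - u) \<bullet> (u - c) = - ((a - u) \<bullet> (c - u))"
    by (metis inner_minus_right minus_diff_eq)
  have "(dist a c)\<^sup>2 = (norm (a - u))\<^sup>2 + (norm (u - c))\<^sup>2 + 2 * ((a - u) \<bullet> (u - c))"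
    unfolding dist_norm e2 norm_add_sq ..
  then show "(dist u c)\<^sup>2 + (dist a u)\<^sup>2 \<le> (dist a c)\<^sup>2"
    using var e3 by (simp add: dist_norm)
qed

lemma convex_infdist_sublevel:
  fixes A :: "'a::real_normed_vector set"
  assumes cv: "convex A"
  shows "convex {z. infdist z A \<le> r}"
proof (cases "A = {}")
  case True then show ?thesis by (simp add: infdist_def)
next
  case ne: False
  show ?thesis
  proof (rule convexI)
    fix z1 z2 and u v :: real
    assume z: "z1 \<in> {z. infdist z A \<le> r}" "z2 \<in> {z. infdist z A \<le> r}" and uv: "0 \<le> u" "0 \<le> v" "u + v = 1"
    have "infdist (u *\<^sub>R z1 + v *\<^sub>R z2) A \<le> r + e" if e: "e > 0" for e
    proof -
      obtain c1 where c1: "c1 \<in> A" "dist z1 c1 < infdist z1 A + e" using infdist_approx[OF ne e] by blast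
      obtain c2 where c2: "c2 \<in> A" "dist z2 c2 < infdist z2 A + e" using infdist_approx[OF ne e] by blast
      have cA: "u *\<^sub>R c1 + v *\<^sub>R c2 \<in> A" using convexD[OF cv c1(1) c2(1) uv] .
      have "dist (u *\<^sub>R z1 + v *\<^sub>R z2) (u *\<^sub>R c1 + v *\<^sub>R c2) = norm (u *\<^sub>R (z1 - c1) + v *\<^sub>R (z2 - c2))"
        by (simp add: dist_norm algebra_simps)
      also have "\<dots> \<le> u * dist z1 c1 + v * dist z2 c2"
        using norm_triangle_ineq[of "u *\<^sub>R (z1 - c1)" "v *\<^sub>R (z2 - c2)"] uv by (simp add: dist_norm)
      also have "\<dots> \<le> u * (r + e) + v * (r + e)"
        using c1 c2 z uv by (intro add_mono mult_left_mono) auto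
      also have "\<dots> = (u + v) * (r + e)" by (rule distrib_right[symmetric])
      also have "\<dots> = r + e" using uv by simp
      finally show ?thesis using infdist_le[OF cA] by (meson order_trans)
    qed
    then have "infdist (u *\<^sub>R z1 + v *\<^sub>R z2) A \<le> r" by (rule field_le_epsilon)
    then show "u *\<^sub>R z1 + v *\<^sub>R z2 \<in> {z. infdist z A \<le> r}" by simp
  qed
qed

lemma closed_infdist_sublevel: "closed {z. infdist z A \<le> r}"
  by (rule closed_Collect_le) (rule continuous_on_infdist[OF continuous_on_id], rule continuous_on_const)


lemma tail_hull_point:
  fixes z :: "nat \<Rightarrow> 'a::{real_inner,complete_space}"
  assumes bnd: "\<And>k. norm (z k) \<le> B"
  shows "\<exists>q. \<forall>N. q \<in> closure (convex hull (z ` {N..}))"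
proof (rule nested_convex_nonempty)
  show "closure (convex hull (z ` {Suc N..})) \<subseteq> closure (convex hull (z ` {N..}))" for N
    by (intro closure_mono hull_mono image_mono) auto
  show "closure (convex hull (z ` {N..})) \<noteq> {}" for N by simp
  show "closed (closure (convex hull (z ` {N..})))" for N by simp
  show "convex (closure (convex hull (z ` {N..})))" for N
    by (intro convex_closure convex_convex_hull)
  have "bounded (z ` {0..})" using bnd unfolding bounded_iff by blast
  then show "bounded (closure (convex hull (z ` {0..})))"
    by (intro bounded_closure bounded_convex_hull)
qed

lemma tail_hull_in:
  assumes q: "\<forall>N. q \<in> closure (convex hull (z ` {N..}))"
    and S: "closed S" "convex S" and N0: "\<forall>k\<ge>N0. z k \<in> S"
  shows "q \<in> S"
proof -
  have "z ` {N0..} \<subseteq> S" using N0 by auto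
  then have "convex hull (z ` {N0..}) \<subseteq> S" using S(2) by (rule hull_minimal)
  then have "closure (convex hull (z ` {N0..})) \<subseteq> S" using S(1) by (rule closure_minimal)
  then show ?thesis using q by blast
qed

lemma tail_hull_inner:
  fixes z :: "nat \<Rightarrow> 'a::real_inner"
  assumes q: "\<forall>N. q \<in> closure (convex hull (z ` {N..}))"
    and lim: "(\<lambda>k. z k \<bullet> v) \<longlonglongrightarrow> L"
  shows "q \<bullet> v = L"
proof -
  have "\<bar>q \<bullet> v - L\<bar> \<le> 0 + \<eta>" if "\<eta> > 0" for \<eta>
  proof -
    obtain N where N: "\<And>k. k \<ge> N \<Longrightarrow> \<bar>z k \<bullet> v - L\<bar> < \<eta>"
      using lim \<open>\<eta> > 0\<close> unfolding LIMSEQ_iff by (auto simp: real_norm_def)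
    have "q \<in> {w. v \<bullet> w \<le> L + \<eta>}"
      by (rule tail_hull_in[OF q closed_halfspace_le convex_halfspace_le, of N])
        (use N in \<open>force simp: inner_commute abs_less_iff\<close>)
    moreover have "q \<in> {w. L - \<eta> \<le> v \<bullet> w}"
      by (rule tail_hull_in[OF q closed_halfspace_ge convex_halfspace_ge, of N])
        (use N in \<open>force simp: inner_commute abs_less_iff\<close>)
    ultimately show ?thesis by (simp add: inner_commute abs_le_iff)
  qed
  then have "\<bar>q \<bullet> v - L\<bar> \<le> 0" by (rule field_le_epsilon)
  then show ?thesis by simp
qed

lemma tail_hull_ge:
  fixes z :: "nat \<Rightarrow> 'a::real_inner"
  assumes q: "\<forall>N. q \<in> closure (convex hull (z ` {N..}))"
    and ge: "\<And>k. b \<le> z k \<bullet> y"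
  shows "b \<le> q \<bullet> y"
proof -
  have "q \<in> {w. b \<le> y \<bullet> w}"
    by (rule tail_hull_in[OF q closed_halfspace_ge convex_halfspace_ge, of 0])
      (use ge in \<open>simp add: inner_commute\<close>)
  then show ?thesis by (simp add: inner_commute)
qed

lemma weak_abstract:
  fixes x :: "nat \<Rightarrow> 'a::{real_inner,complete_space}" and C :: "'i \<Rightarrow> 'a set"
  assumes cl: "\<And>a. a \<in> \<Omega> \<Longrightarrow> closed (C a)"
    and cvx: "\<And>a. a \<in> \<Omega> \<Longrightarrow> convex (C a)"
    and ne: "(\<Inter>a\<in>\<Omega>. C a) \<noteq> {}"
    and bnd: "\<And>n. norm (x n) \<le> B"
    and conv: "\<And>c. c \<in> (\<Inter>a\<in>\<Omega>. C a) \<Longrightarrow> convergent (\<lambda>n. (dist (x n) c)\<^sup>2)"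
    and near: "\<And>\<beta> \<eta>. \<beta> \<in> \<Omega> \<Longrightarrow> \<eta> > 0 \<Longrightarrow> \<exists>N. \<forall>n\<ge>N. infdist (x n) (C \<beta>) \<le> \<eta>"
  shows "\<exists>p\<in>(\<Inter>a\<in>\<Omega>. C a). weakly_converges x p"
proof -
  have inC: "q \<in> (\<Inter>a\<in>\<Omega>. C a)"
    if sm: "strict_mono \<sigma>" and q: "\<forall>N. q \<in> closure (convex hull ((\<lambda>k. x (\<sigma> k)) ` {N..}))" for \<sigma> :: "nat \<Rightarrow> nat" and q
  proof -
    have "q \<in> C \<beta>" if \<beta>: "\<beta> \<in> \<Omega>" for \<beta>
    proof -
      have Cne: "C \<beta> \<noteq> {}" using ne \<beta> by auto
      have "infdist q (C \<beta>) \<le> 0 + \<eta>" if eta: "\<eta> > 0" for \<eta>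
      proof -
        obtain N where N: "\<forall>n\<ge>N. infdist (x n) (C \<beta>) \<le> \<eta>" using near[OF \<beta> eta] by blast
        have "\<forall>k\<ge>N. x (\<sigma> k) \<in> {z. infdist z (C \<beta>) \<le> \<eta>}"
          using N seq_suble[OF sm] by (auto intro: le_trans)
        then have "q \<in> {z. infdist z (C \<beta>) \<le> \<eta>}"
          by (rule tail_hull_in[OF q closed_infdist_sublevel convex_infdist_sublevel[OF cvx[OF \<beta>]]])
        then show ?thesis by simp
      qed
      then have "infdist q (C \<beta>) \<le> 0" by (rule field_le_epsilon)
      then have "infdist q (C \<beta>) = 0" using infdist_nonneg[of q "C \<beta>"] by linarith
      then have "q \<in> closure (C \<beta>)" using in_closure_iff_infdist_zero[OF Cne] by blast
      then show ?thesis using closure_closed[OF cl[OF \<beta>]] by simp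
    qed
    then show ?thesis by blast
  qed
  have innerlim: "\<exists>L. (\<lambda>n. x n \<bullet> (q - p)) \<longlonglongrightarrow> L"
    if p: "p \<in> (\<Inter>a\<in>\<Omega>. C a)" and q: "q \<in> (\<Inter>a\<in>\<Omega>. C a)" for p q
  proof -
    obtain Lp where Lp: "(\<lambda>n. (dist (x n) p)\<^sup>2) \<longlonglongrightarrow> Lp" using conv[OF p] by (auto simp: convergent_def)
    obtain Lq where Lq: "(\<lambda>n. (dist (x n) q)\<^sup>2) \<longlonglongrightarrow> Lq" using conv[OF q] by (auto simp: convergent_def)
    have eq: "x n \<bullet> (q - p) = ((dist (x n) p)\<^sup>2 - (dist (x n) q)\<^sup>2 - (norm p)\<^sup>2 + (norm q)\<^sup>2) / 2" for n
      unfolding dist_norm norm_diff_sq by (simp add: inner_diff_right)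
    have "(\<lambda>n. ((dist (x n) p)\<^sup>2 - (dist (x n) q)\<^sup>2 - (norm p)\<^sup>2 + (norm q)\<^sup>2) / 2)
        \<longlonglongrightarrow> (Lp - Lq - (norm p)\<^sup>2 + (norm q)\<^sup>2) / 2"
      by (intro tendsto_intros Lp Lq) simp
    then show ?thesis unfolding eq[symmetric] by blast
  qed
  have sm_id: "strict_mono (\<lambda>k::nat. k)" by (simp add: strict_mono_def)
  obtain p where p: "\<forall>N. p \<in> closure (convex hull (x ` {N..}))"
    using tail_hull_point[of x B, OF bnd] by blast
  have pC: "p \<in> (\<Inter>a\<in>\<Omega>. C a)" using inC[OF sm_id] p by simp
  have "weakly_converges x p"
    unfolding weakly_converges_def
  proof
    fix y
    show "(\<lambda>n. x n \<bullet> y) \<longlonglongrightarrow> p \<bullet> y"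
    proof (rule ccontr)
      assume nl: "\<not> ?thesis"
      then obtain \<epsilon> where ep: "\<epsilon> > 0" and fr: "\<forall>N. \<exists>n\<ge>N. \<epsilon> \<le> \<bar>x n \<bullet> y - p \<bullet> y\<bar>"
        unfolding LIMSEQ_iff by (auto simp: real_norm_def not_less)
      have inf: "infinite {n. \<epsilon> \<le> \<bar>x n \<bullet> y - p \<bullet> y\<bar>}"
        using fr unfolding infinite_nat_iff_unbounded_le by blast
      have sub: "{n. \<epsilon> \<le> \<bar>x n \<bullet> y - p \<bullet> y\<bar>} \<subseteq> {n. p \<bullet> y + \<epsilon> \<le> x n \<bullet> y} \<union> {n. p \<bullet> (-y) + \<epsilon> \<le> x n \<bullet> (-y)}"
        by auto
      have "\<exists>y'. infinite {n. p \<bullet> y' + \<epsilon> \<le> x n \<bullet> y'}"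
      proof (rule ccontr)
        assume "\<not> ?thesis"
        then have f1: "finite {n. p \<bullet> y + \<epsilon> \<le> x n \<bullet> y}" and f2: "finite {n. p \<bullet> (-y) + \<epsilon> \<le> x n \<bullet> (-y)}"
          by blast+
        then have "finite ({n. p \<bullet> y + \<epsilon> \<le> x n \<bullet> y} \<union> {n. p \<bullet> (-y) + \<epsilon> \<le> x n \<bullet> (-y)})"
          by (rule finite_UnI)
        then show False using inf finite_subset[OF sub] by blast
      qed
      then obtain y' where inf': "infinite {n. p \<bullet> y' + \<epsilon> \<le> x n \<bullet> y'}" by blast
      define \<sigma> where "\<sigma> = enumerate {n. p \<bullet> y' + \<epsilon> \<le> x n \<bullet> y'}"
      have sm: "strict_mono \<sigma>" unfolding \<sigma>_def using strict_mono_enumerate[OF inf'] .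
      have ge: "\<And>k. p \<bullet> y' + \<epsilon> \<le> x (\<sigma> k) \<bullet> y'"
        using enumerate_in_set[OF inf'] unfolding \<sigma>_def by blast
      obtain q where q: "\<forall>N. q \<in> closure (convex hull ((\<lambda>k. x (\<sigma> k)) ` {N..}))"
        using tail_hull_point[of "\<lambda>k. x (\<sigma> k)" B, OF bnd] by blast
      have qC: "q \<in> (\<Inter>a\<in>\<Omega>. C a)" using inC[OF sm q] .
      have qge: "p \<bullet> y' + \<epsilon> \<le> q \<bullet> y'" using tail_hull_ge[OF q ge] .
      obtain L where L: "(\<lambda>n. x n \<bullet> (q - p)) \<longlonglongrightarrow> L" using innerlim[OF pC qC] by blast
      have Ls: "(\<lambda>k. x (\<sigma> k) \<bullet> (q - p)) \<longlonglongrightarrow> L"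
        using LIMSEQ_subseq_LIMSEQ[OF L sm] by (simp add: o_def)
      have qL: "q \<bullet> (q - p) = L" using tail_hull_inner[OF q Ls] .
      have pL: "p \<bullet> (q - p) = L" using tail_hull_inner[OF p L] .
      have "(q - p) \<bullet> (q - p) = 0" using qL pL by (simp add: inner_diff_left)
      then have "q = p" by simp
      then show False using qge ep by simp
    qed
  qed
  then show ?thesis using pC by blast
qed


lemma dist_chain:
  fixes x :: "nat \<Rightarrow> 'a::metric_space"
  shows "dist (x n) (x (n + k)) \<le> (\<Sum>j<k. dist (x (n + j)) (x (Suc (n + j))))"
proof (induction k)
  case 0 then show ?case by simp
next
  case (Suc k)
  have "dist (x n) (x (n + Suc k)) \<le> dist (x n) (x (n + k)) + dist (x (n + k)) (x (Suc (n + k)))"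
    using dist_triangle by simp
  then show ?case using Suc by simp
qed

theorem theorem2:
  fixes \<Omega> :: "'i set"
    and C :: "'i \<Rightarrow> 'a::{real_inner,complete_space} set"
    and t :: "nat \<Rightarrow> real"
    and \<alpha> :: "nat \<Rightarrow> 'i"
    and x :: "nat \<Rightarrow> 'a"
  assumes two: "\<exists>a\<in>\<Omega>. \<exists>b\<in>\<Omega>. a \<noteq> b"
    and closed: "\<And>a. a \<in> \<Omega> \<Longrightarrow> closed (C a)"
    and convex: "\<And>a. a \<in> \<Omega> \<Longrightarrow> convex (C a)"
    and nonempty: "(\<Inter>a\<in>\<Omega>. C a) \<noteq> {}"
    and t_range: "\<And>n. 0 \<le> t n \<and> t n \<le> 1"
    and t_recurrent: "\<exists>\<delta>>0. \<exists>K::nat. \<forall>n. \<exists>k\<le>K. t (n + k) > \<delta>"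
    and seq: "remote_projections \<Omega> C t \<alpha> x"
  shows "\<exists>p\<in>(\<Inter>a\<in>\<Omega>. C a). weakly_converges x p"
proof -
  obtain c0 where c0: "c0 \<in> (\<Inter>a\<in>\<Omega>. C a)" using nonempty by blast
  obtain \<delta> K where dpos: "\<delta> > 0" and rec: "\<And>n. \<exists>k\<le>K. t (n + k) > \<delta>"
    using t_recurrent by blast
  have S: "\<And>n. \<alpha> n \<in> \<Omega>"
    "\<And>n. infdist (x n) (C (\<alpha> n)) \<ge> t n * (SUP \<beta>\<in>\<Omega>. infdist (x n) (C \<beta>))"
    "\<And>n. x (Suc n) = metric_projection (C (\<alpha> n)) (x n)"
    using seq unfolding remote_projections_def by auto
  define e where "e n = dist (x n) (x (Suc n))" for n
  have Cne: "C (\<alpha> n) \<noteq> {}" for n using c0 S(1)[of n] by auto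
  note pp = proj_props[OF closed[OF S(1)] convex[OF S(1)] Cne S(3)]
  have e_inf: "e n = infdist (x n) (C (\<alpha> n))" for n unfolding e_def using pp(2) .
  have fej: "(dist (x (Suc n)) c)\<^sup>2 + (e n)\<^sup>2 \<le> (dist (x n) c)\<^sup>2" if c: "c \<in> (\<Inter>a\<in>\<Omega>. C a)" for n c
    unfolding e_def using pp(3)[of c n] c S(1)[of n] by auto
  have dec: "decseq (\<lambda>n. (dist (x n) c)\<^sup>2)" if c: "c \<in> (\<Inter>a\<in>\<Omega>. C a)" for c
  proof (rule decseq_SucI)
    show "(dist (x (Suc n)) c)\<^sup>2 \<le> (dist (x n) c)\<^sup>2" for n
      using fej[OF c, of n] by (smt (verit) zero_le_power2)
  qed
  have conv: "convergent (\<lambda>n. (dist (x n) c)\<^sup>2)" if c: "c \<in> (\<Inter>a\<in>\<Omega>. C a)" for c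
  proof -
    obtain L where "(\<lambda>n. (dist (x n) c)\<^sup>2) \<longlonglongrightarrow> L"
      using decseq_convergent[OF dec[OF c], of 0] by auto
    then show ?thesis by (auto simp: convergent_def)
  qed
  have bnd: "norm (x n) \<le> norm c0 + dist (x 0) c0" for n
  proof -
    have "(dist (x n) c0)\<^sup>2 \<le> (dist (x 0) c0)\<^sup>2" using dec[OF c0] by (simp add: decseq_def)
    then have "dist (x n) c0 \<le> dist (x 0) c0" by (rule power2_le_imp_le) simp
    moreover have "norm (x n) \<le> norm c0 + dist (x n) c0"
      using norm_triangle_ineq[of c0 "x n - c0"] by (simp add: dist_norm)
    ultimately show ?thesis by linarith
  qed
  have e0: "e \<longlonglongrightarrow> 0"
  proof -
    obtain L where L: "(\<lambda>n. (dist (x n) c0)\<^sup>2) \<longlonglongrightarrow> L" using conv[OF c0] by (auto simp: convergent_def)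
    have "(\<lambda>n. (dist (x n) c0)\<^sup>2 - (dist (x (Suc n)) c0)\<^sup>2) \<longlonglongrightarrow> L - L"
      by (intro tendsto_diff L LIMSEQ_Suc[OF L])
    then have "(\<lambda>n. sqrt ((dist (x n) c0)\<^sup>2 - (dist (x (Suc n)) c0)\<^sup>2)) \<longlonglongrightarrow> sqrt 0"
      by (intro tendsto_real_sqrt) simp
    then have sq: "(\<lambda>n. sqrt ((dist (x n) c0)\<^sup>2 - (dist (x (Suc n)) c0)\<^sup>2)) \<longlonglongrightarrow> 0" by simp
    have "e n \<le> sqrt ((dist (x n) c0)\<^sup>2 - (dist (x (Suc n)) c0)\<^sup>2)" for n
      using fej[OF c0, of n] by (intro real_le_rsqrt) simp
    moreover have "0 \<le> e n" for n unfolding e_def by simp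
    ultimately show ?thesis
      by (intro tendsto_sandwich[OF _ _ tendsto_const sq]) auto
  qed
  define E where "E n = (\<Sum>j\<le>K. e (n + j))" for n
  have E0: "E \<longlonglongrightarrow> 0"
  proof -
    have "(\<lambda>n. \<Sum>j\<le>K. e (n + j)) \<longlonglongrightarrow> (\<Sum>j\<le>K. 0)"
      by (intro tendsto_sum LIMSEQ_ignore_initial_segment[OF e0])
    then show ?thesis unfolding E_def by simp
  qed
  have enn: "0 \<le> e n" for n unfolding e_def by simp
  have nearb: "infdist (x n) (C \<beta>) \<le> E n / \<delta> + E n" if \<beta>: "\<beta> \<in> \<Omega>" for n \<beta>
  proof -
    obtain k where k: "k \<le> K" "t (n + k) > \<delta>" using rec[of n] by blast
    define m where "m = n + k"
    define s where "s = (SUP \<beta>\<in>\<Omega>. infdist (x m) (C \<beta>))"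
    have bdd: "bdd_above ((\<lambda>\<beta>. infdist (x m) (C \<beta>)) ` \<Omega>)"
    proof (rule bdd_aboveI2)
      fix \<gamma> assume "\<gamma> \<in> \<Omega>"
      then have "c0 \<in> C \<gamma>" using c0 by auto
      then show "infdist (x m) (C \<gamma>) \<le> dist (x m) c0" by (rule infdist_le)
    qed
    have h1: "infdist (x m) (C \<beta>) \<le> s" unfolding s_def using cSUP_upper[OF \<beta> bdd] .
    have s0: "0 \<le> s" using h1 infdist_nonneg[of "x m" "C \<beta>"] by linarith
    have h2: "t m * s \<le> e m" unfolding s_def e_inf using S(2)[of m] .
    have "\<delta> * s \<le> t m * s" using k(2) s0 unfolding m_def by (intro mult_right_mono) auto
    also have "e m \<le> E n" unfolding E_def m_def
      using k(1) enn by (intro member_le_sum) auto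
    ultimately have "\<delta> * s \<le> E n" using h2 by linarith
    then have sE: "s \<le> E n / \<delta>" using dpos by (simp add: pos_le_divide_eq mult.commute)
    have "dist (x n) (x m) \<le> (\<Sum>j<k. e (n + j))" unfolding m_def e_def by (rule dist_chain)
    also have "\<dots> \<le> E n" unfolding E_def
      using k(1) enn by (intro sum_mono2) auto
    finally have dE: "dist (x n) (x m) \<le> E n" .
    have "infdist (x n) (C \<beta>) \<le> infdist (x m) (C \<beta>) + dist (x n) (x m)" by (rule infdist_triangle)
    then show ?thesis using h1 sE dE by linarith
  qed
  have rlim: "(\<lambda>n. E n / \<delta> + E n) \<longlonglongrightarrow> 0"
    using tendsto_add[OF tendsto_divide_zero[OF E0, of \<delta>] E0] by simp
  have near: "\<exists>N. \<forall>n\<ge>N. infdist (x n) (C \<beta>) \<le> \<eta>" if \<beta>: "\<beta> \<in> \<Omega>" and eta: "\<eta> > 0" for \<beta> \<eta>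
  proof -
    have "eventually (\<lambda>n. dist (E n / \<delta> + E n) 0 < \<eta>) sequentially"
      using tendstoD[OF rlim eta] .
    then obtain N where N: "\<And>n. n \<ge> N \<Longrightarrow> dist (E n / \<delta> + E n) 0 < \<eta>"
      by (auto simp: eventually_sequentially)
    have "infdist (x n) (C \<beta>) \<le> \<eta>" if "n \<ge> N" for n
      using N[OF that] nearb[OF \<beta>, of n] by (auto simp: dist_real_def)
    then show ?thesis by blast
  qed
  show ?thesis
    by (rule weak_abstract[OF closed convex nonempty bnd conv near]) auto
qed

end
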